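(* Let $H$ be a $3$-graph with $s$ vertices, let $t\geq 1$, and let $G$ be a $3$-graph that is $H\sqcup S_{2,t}$-free. Let $v_1,v_2\in V(G)$ be distinct. If $G-\{v_1\}$ contains a copy of $H$ and $G-\{v_1,v_2\}$ contains no copy of $H$, then $\omega\big((G-\{v_2\})_{v_1}\big)\leq s+t-1$.
   Context: A $3$-graph $G$ is $F$-free if it contains no subgraph isomorphic to $F$. $S_{2,t}$ is the $3$-graph with vertex set $\{w_1,w_2,u_1,\dots,u_t\}$ and edge set $\{w_1w_2u_1,\dots,w_1w_2u_t\}$. $\sqcup$ denotes vertex-disjoint union. For $S\subseteq V(G)$, $G-S$ is the subgraph of $G$ induced by $V(G)\setminus S$. For a $3$-graph $G'$ and $v\in V(G')$, the link graph of $v$ is the $2$-graph $G'_v=\{ab: vab\in E(G')\}$, and $\omega(\cdot)$ denotes the order of a maximum clique of a $2$-graph. *)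

theory Defs
  imports Main
begin

definition is_3graph :: "'a set \<Rightarrow> 'a set set \<Rightarrow> bool" where
  "is_3graph V E \<longleftrightarrow> (\<forall>e\<in>E. e \<subseteq> V \<and> card e = 3)"

definition contains_copy :: "'b set \<Rightarrow> 'b set set \<Rightarrow> 'a set \<Rightarrow> 'a set set \<Rightarrow> bool" where
  "contains_copy VF EF VG EG \<longleftrightarrow>
     (\<exists>f. inj_on f VF \<and> f ` VF \<subseteq> VG \<and> (\<forall>e\<in>EF. f ` e \<in> EG))"

text \<open>S_{2,t}: vertices w1 = 0, w2 = 1, u_i = i+1 (1 \<le> i \<le> t).\<close>
definition S2_V :: "nat \<Rightarrow> nat set" where
  "S2_V t = {0..t+1}"
definition S2_E :: "nat \<Rightarrow> nat set set" where
  "S2_E t = {{0, 1, k} | k. k \<in> {2..t+1}}"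

definition dunion_V :: "'a set \<Rightarrow> 'b set \<Rightarrow> ('a + 'b) set" where
  "dunion_V V1 V2 = Inl ` V1 \<union> Inr ` V2"
definition dunion_E :: "'a set set \<Rightarrow> 'b set set \<Rightarrow> ('a + 'b) set set" where
  "dunion_E E1 E2 = (\<lambda>e. Inl ` e) ` E1 \<union> (\<lambda>e. Inr ` e) ` E2"

definition del_V :: "'a set \<Rightarrow> 'a set \<Rightarrow> 'a set" where
  "del_V V S = V - S"
definition del_E :: "'a set \<Rightarrow> 'a set set \<Rightarrow> 'a set \<Rightarrow> 'a set set" where
  "del_E V E S = {e \<in> E. e \<subseteq> V - S}"

definition link_V :: "'a set \<Rightarrow> 'a \<Rightarrow> 'a set" where
  "link_V V v = V - {v}"
definition link_E :: "'a set set \<Rightarrow> 'a \<Rightarrow> 'a set set" where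
  "link_E E v = {{a, b} | a b. {v, a, b} \<in> E \<and> a \<noteq> b \<and> a \<noteq> v \<and> b \<noteq> v}"

definition is_clique :: "'a set set \<Rightarrow> 'a set \<Rightarrow> bool" where
  "is_clique E K \<longleftrightarrow> (\<forall>a\<in>K. \<forall>b\<in>K. a \<noteq> b \<longrightarrow> {a, b} \<in> E)"
definition clique_number :: "'a set \<Rightarrow> 'a set set \<Rightarrow> nat" where
  "clique_number V E = Max {card K | K. K \<subseteq> V \<and> is_clique E K}"

end

theory Submission
  imports Defs
begin

lemma cliqueD: "is_clique E K \<Longrightarrow> a \<in> K \<Longrightarrow> b \<in> K \<Longrightarrow> a \<noteq> b \<Longrightarrow> {a, b} \<in> E"
  unfolding is_clique_def by blast

theorem claim3p6:
  fixes VH :: "'b set" and EH :: "'b set set"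
    and VG :: "'a set" and EG :: "'a set set"
    and s t :: nat and v1 v2 :: 'a
  assumes H: "is_3graph VH EH" "finite VH" "card VH = s"
    and t: "t \<ge> 1"
    and G: "is_3graph VG EG" "finite VG"
    and free: "\<not> contains_copy (dunion_V VH (S2_V t)) (dunion_E EH (S2_E t)) VG EG"
    and v: "v1 \<in> VG" "v2 \<in> VG" "v1 \<noteq> v2"
    and c1: "contains_copy VH EH (del_V VG {v1}) (del_E VG EG {v1})"
    and c2: "\<not> contains_copy VH EH (del_V VG {v1, v2}) (del_E VG EG {v1, v2})"
  shows "clique_number (link_V (del_V VG {v2}) v1) (link_E (del_E VG EG {v2}) v1) \<le> s + t - 1"
proof -
  obtain f where f1: "inj_on f VH" and f2: "f ` VH \<subseteq> VG - {v1}"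
    and f3: "\<forall>e\<in>EH. f ` e \<in> del_E VG EG {v1}"
    using c1 unfolding contains_copy_def del_V_def by blast
  have eH: "\<And>e. e \<in> EH \<Longrightarrow> e \<subseteq> VH" using H(1) unfolding is_3graph_def by blast
  have v2f: "v2 \<in> f ` VH"
  proof (rule ccontr)
    assume a: "v2 \<notin> f ` VH"
    have "contains_copy VH EH (del_V VG {v1, v2}) (del_E VG EG {v1, v2})"
      unfolding contains_copy_def
    proof (intro exI conjI)
      show "inj_on f VH" by fact
      show "f ` VH \<subseteq> del_V VG {v1, v2}" using f2 a unfolding del_V_def by auto
      show "\<forall>e\<in>EH. f ` e \<in> del_E VG EG {v1, v2}"
      proof
        fix e assume e: "e \<in> EH"
        have "f ` e \<subseteq> VG - {v1, v2}" using eH[OF e] f2 a by auto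
        then show "f ` e \<in> del_E VG EG {v1, v2}" using f3 e unfolding del_E_def by auto
      qed
    qed
    then show False using c2 by blast
  qed
  have cardf: "card (f ` VH) = s" using f1 H(3) card_image by blast
  have bound: "card K \<le> s + t - 1" if K: "K \<subseteq> VG - {v2} - {v1}"
    "is_clique (link_E (del_E VG EG {v2}) v1) K" for K
  proof (rule ccontr)
    assume "\<not> card K \<le> s + t - 1"
    then have cK: "card K \<ge> s + t" by linarith
    have finK: "finite K" using K(1) G(2) finite_subset by blast
    define A where "A = K - f ` VH"
    have "K \<inter> f ` VH \<subseteq> f ` VH - {v2}" using K(1) by auto
    then have "card (K \<inter> f ` VH) \<le> s - 1"
    proof -
      have fin: "finite (f ` VH - {v2})" using H(2) by simp
      have "card (f ` VH - {v2}) = s - 1" using v2f cardf H(2) by (simp add: card_Diff_singleton)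
      then show ?thesis using card_mono[OF fin \<open>K \<inter> f ` VH \<subseteq> f ` VH - {v2}\<close>] by simp
    qed
    moreover have "card K = card A + card (K \<inter> f ` VH)"
    proof -
      have "K = A \<union> (K \<inter> f ` VH)" "A \<inter> (K \<inter> f ` VH) = {}" unfolding A_def by auto
      then show ?thesis using finK card_Un_disjoint[of A "K \<inter> f ` VH"]
        by (metis finite_Un)
    qed
    moreover have "s \<ge> 1" using v2f cardf H(2) by (metis One_nat_def Suc_leI card_gt_0_iff empty_iff finite_imageI)
    ultimately have cA: "card A \<ge> t + 1" using cK by linarith
    have finA: "finite A" unfolding A_def using finK by auto
    then obtain w where w: "w \<in> A" using cA by fastforce
    have "card (A - {w}) \<ge> t" using cA w finA by auto
    then have "card {2..t+1} \<le> card (A - {w})" by simp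
    then obtain h where h1: "h ` {2..t+1} \<subseteq> A - {w}" and h2: "inj_on h {2..t+1}"
      using card_le_inj[of "{2..t+1}" "A - {w}"] finA by auto
    define g where "g = (\<lambda>k::nat. if k = 0 then v1 else if k = 1 then w else h k)"
    define F where "F = case_sum f g"
    have AK: "A \<subseteq> K" "A \<inter> f ` VH = {}" unfolding A_def by auto
    have wK: "w \<in> K" using w AK by blast
    have hK: "h m \<in> K \<and> h m \<noteq> w" if "m \<in> {2..t+1}" for m using h1 AK that by blast
    have KV: "K \<subseteq> VG" using K(1) by blast
    have edge: "{v1, w, h k} \<in> EG" if k: "k \<in> {2..t+1}" for k
    proof -
      have "h k \<in> K" "w \<in> K" "h k \<noteq> w" using hK[OF k] wK by auto
      then have "{w, h k} \<in> link_E (del_E VG EG {v2}) v1" using cliqueD[OF K(2)] by simp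
      then obtain a b where ab: "{w, h k} = {a, b}" "{v1, a, b} \<in> del_E VG EG {v2}"
        unfolding link_E_def by blast
      have "{v1, a, b} = {v1, w, h k}" using ab(1) by simp
      then show ?thesis using ab(2) unfolding del_E_def by auto
    qed
    have "contains_copy (dunion_V VH (S2_V t)) (dunion_E EH (S2_E t)) VG EG"
      unfolding contains_copy_def
    proof (intro exI conjI)
      show "inj_on F (dunion_V VH (S2_V t))"
      proof (rule inj_onI)
        fix x y assume x: "x \<in> dunion_V VH (S2_V t)" and y: "y \<in> dunion_V VH (S2_V t)"
          and xy: "F x = F y"
        have S2c: "k = 0 \<or> k = 1 \<or> k \<in> {2..t+1}" if "k \<in> S2_V t" for k
          using that unfolding S2_V_def by auto
        have g0: "g 0 = v1" and g1: "g 1 = w" unfolding g_def by auto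
        have g2: "g k = h k" if "k \<in> {2..t+1}" for k using that unfolding g_def by auto
        have v1K: "v1 \<notin> K" using K(1) by auto
        have hA: "h m \<in> A" if "m \<in> {2..t+1}" for m using h1 that by blast
        have v1f: "v1 \<notin> f ` VH" using f2 by blast
        have gK: "g k \<notin> f ` VH" if "k \<in> S2_V t" for k
        proof -
          have "k = 0 \<or> k = 1 \<or> k \<in> {2..t+1}" using S2c[OF that] .
          then show ?thesis
          proof (elim disjE)
            assume "k = 0" then show ?thesis using g0 v1f by simp
          next
            assume "k = 1" then show ?thesis using g1 w AK(2) by blast
          next
            assume k: "k \<in> {2..t+1}" 
            have "h k \<notin> f ` VH" using hA[OF k] AK(2) by blast
            then show ?thesis using g2[OF k] by simp
          qed
        qed
        have ginj: "k = l" if kl: "k \<in> S2_V t" "l \<in> S2_V t" "g k = g l" for k l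
        proof -
          have A1: "k = 0 \<or> k = 1 \<or> k \<in> {2..t+1}" using S2c[OF kl(1)] .
          have A2: "l = 0 \<or> l = 1 \<or> l \<in> {2..t+1}" using S2c[OF kl(2)] .
          have hK': "h m \<in> K" "h m \<noteq> w" if "m \<in> {2..t+1}" for m using hK[OF that] by simp_all
          show ?thesis
          proof (cases "k \<in> {2..t+1}")
            case kk: True
            show ?thesis
            proof (cases "l \<in> {2..t+1}")
              case True
              then have "h k = h l" using kl(3) g2 kk by simp
              then show ?thesis using inj_onD[OF h2 _ kk True] by simp
            next
              case False
              then have "l = 0 \<or> l = 1" using A2 by blast
              then show ?thesis using kl(3) g2[OF kk] g0 g1 hK'[OF kk] v1K by auto
            qed
          next
            case kk: False
            then have k01: "k = 0 \<or> k = 1" using A1 by blast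
            show ?thesis
            proof (cases "l \<in> {2..t+1}")
              case True
              then show ?thesis using k01 kl(3) g2[OF True] g0 g1 hK'[OF True] v1K by auto
            next
              case False
              then have "l = 0 \<or> l = 1" using A2 by blast
              then show ?thesis using k01 kl(3) g0 g1 wK v1K by auto
            qed
          qed
        qed
        show "x = y"
        proof (cases x)
          case (Inl a)
          then have a: "a \<in> VH" using x unfolding dunion_V_def by auto
          show ?thesis
          proof (cases y)
            case (Inl b)
            then have "b \<in> VH" using y unfolding dunion_V_def by auto
            then show ?thesis using inj_onD[OF f1 _ a] xy Inl \<open>x = Inl a\<close> unfolding F_def by simp
          next
            case (Inr l)
            then have "l \<in> S2_V t" using y unfolding dunion_V_def by auto
            moreover have "f a \<in> f ` VH" using a by (rule imageI)
            ultimately show ?thesis using gK[of l] xy Inr \<open>x = Inl a\<close> unfolding F_def by simp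
          qed
        next
          case (Inr k)
          then have k: "k \<in> S2_V t" using x unfolding dunion_V_def by auto
          show ?thesis
          proof (cases y)
            case (Inl b)
            then have "b \<in> VH" using y unfolding dunion_V_def by auto
            then have "f b \<in> f ` VH" by (rule imageI)
            then show ?thesis using gK[OF k] xy Inl \<open>x = Inr k\<close> unfolding F_def by simp
          next
            case (Inr l)
            then have "l \<in> S2_V t" using y unfolding dunion_V_def by auto
            then show ?thesis using ginj[OF k] xy Inr \<open>x = Inr k\<close> unfolding F_def by auto
          qed
        qed
      qed
      show "F ` dunion_V VH (S2_V t) \<subseteq> VG"
      proof
        fix y assume "y \<in> F ` dunion_V VH (S2_V t)"
        then obtain x where x: "x \<in> dunion_V VH (S2_V t)" "y = F x" by blast
        show "y \<in> VG"
        proof (cases x)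
          case (Inl a) then show ?thesis using x f2 unfolding dunion_V_def F_def by auto
        next
          case (Inr k)
          then have k: "k \<le> t + 1" using x unfolding dunion_V_def S2_V_def by auto
          show ?thesis
          proof (cases "k = 0 \<or> k = 1")
            case True then show ?thesis using Inr x v wK KV unfolding F_def g_def by auto
          next
            case False
            then have "k \<in> {2..t+1}" using k by auto
            then show ?thesis using hK[of k] KV Inr x False unfolding F_def g_def by auto
          qed
        qed
      qed
      show "\<forall>e\<in>dunion_E EH (S2_E t). F ` e \<in> EG"
      proof
        fix e assume "e \<in> dunion_E EH (S2_E t)"
        then consider (l) e' where "e' \<in> EH" "e = Inl ` e'"
          | (r) k where "k \<in> {2..t+1}" "e = Inr ` {0, 1, k}"
          unfolding dunion_E_def S2_E_def by auto
        then show "F ` e \<in> EG"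
        proof cases
          case l then show ?thesis using f3 unfolding F_def del_E_def by (auto simp: image_image)
        next
          case r
          then have "F ` e = {v1, w, h k}" unfolding F_def g_def by auto
          then show ?thesis using edge r by simp
        qed
      qed
    qed
    then show False using free by blast
  qed
  let ?S = "{card K | K. K \<subseteq> link_V (del_V VG {v2}) v1 \<and> is_clique (link_E (del_E VG EG {v2}) v1) K}"
  have fin: "finite ?S"
  proof -
    have "?S \<subseteq> card ` Pow VG" unfolding link_V_def del_V_def by auto
    then show ?thesis using G(2) finite_subset by blast
  qed
  have ne: "?S \<noteq> {}"
    by (rule ex_in_conv[THEN iffD1], rule exI[of _ 0], auto intro!: exI[of _ "{}"] simp: is_clique_def)
  show ?thesis unfolding clique_number_def
    using Max_le_iff[OF fin ne] bound unfolding link_V_def del_V_def by auto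
qed

end
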